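(* Let $n \geqslant 19$ be an integer, and let $T_n$ be the Transposition graph, i.e. the Cayley graph $\mathrm{Cay}(\mathrm{Sym}_n, T)$ where $T$ is the set of all transpositions of $\mathrm{Sym}_n$. Then every integer $m$ with $-\frac{n-4}{2} \leqslant m \leqslant \frac{n-4}{2}$ is an eigenvalue of (the adjacency matrix of) $T_n$.
   Context: $\mathrm{Sym}_n$ is the symmetric group on $n$ letters. The Cayley graph $\mathrm{Cay}(G,S)$ has vertex set $G$, with $g$ adjacent to $gs$ for $s\in S$. The spectrum of $T_n$ is the set of eigenvalues of its adjacency matrix. *)

theory Defs
  imports "HOL-Combinatorics.Combinatorics" Complex_Main
begin

definition Sym :: "nat \<Rightarrow> (nat \<Rightarrow> nat) set" where
  "Sym n = {p. p permutes {0..<n}}"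

definition transpositions :: "nat \<Rightarrow> (nat \<Rightarrow> nat) set" where
  "transpositions n = {transpose a b | a b. a < n \<and> b < n \<and> a \<noteq> b}"

definition cayley_adj :: "('a \<Rightarrow> 'a) set \<Rightarrow> ('a \<Rightarrow> 'a) \<Rightarrow> ('a \<Rightarrow> 'a) \<Rightarrow> real" where
  "cayley_adj S g h = (if \<exists>s\<in>S. h = g \<circ> s then 1 else 0)"

definition is_eigenvalue :: "'v set \<Rightarrow> ('v \<Rightarrow> 'v \<Rightarrow> real) \<Rightarrow> real \<Rightarrow> bool" where
  "is_eigenvalue V A mu \<longleftrightarrow>
     (\<exists>x :: 'v \<Rightarrow> real. (\<exists>v\<in>V. x v \<noteq> 0) \<and> (\<forall>u\<in>V. (\<Sum>w\<in>V. A u w * x w) = mu * x u))"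

end

theory Submission
  imports Defs "HOL-Computational_Algebra.Polynomial"
begin


lemma lagrange_interp:
  fixes x :: "nat \<Rightarrow> real" and q :: "real poly"
  assumes fin: "finite C" and inj: "inj_on x C" and deg: "degree q < card C"
  shows "(\<Sum>a\<in>C. (\<Prod>m\<in>C-{a}. (z - x m)) / (\<Prod>m\<in>C-{a}. (x a - x m)) * poly q (x a)) = poly q z"
proof -
  define L where "L = (\<Sum>a\<in>C. smult (poly q (x a) / (\<Prod>m\<in>C-{a}. (x a - x m))) (\<Prod>m\<in>C-{a}. [:- x m, 1:]))"
  have polyL: "poly L w = (\<Sum>a\<in>C. (\<Prod>m\<in>C-{a}. (w - x m)) / (\<Prod>m\<in>C-{a}. (x a - x m)) * poly q (x a))" for w
    unfolding L_def by (simp add: poly_sum poly_prod algebra_simps)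
  have degL: "degree L < card C"
  proof -
    have "degree L \<le> card C - 1"
      unfolding L_def
    proof (rule degree_sum_le[OF fin])
      fix a assume "a \<in> C"
      have "degree (smult (poly q (x a) / (\<Prod>m\<in>C-{a}. (x a - x m))) (\<Prod>m\<in>C-{a}. [:- x m, 1:]))
          \<le> degree (\<Prod>m\<in>C-{a}. [:- x m, 1:])" by (rule degree_smult_le)
      also have "\<dots> \<le> (\<Sum>m\<in>C-{a}. degree [:- x m, 1:])" using degree_prod_sum_le[of "C-{a}" "\<lambda>m. [:- x m, 1:]"] fin by (simp add: o_def)
      also have "\<dots> = card (C - {a})" by simp
      also have "\<dots> = card C - 1" using \<open>a \<in> C\<close> fin by simp
      finally show "degree (smult (poly q (x a) / (\<Prod>m\<in>C-{a}. (x a - x m))) (\<Prod>m\<in>C-{a}. [:- x m, 1:])) \<le> card C - 1" .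
    qed
    moreover have "card C > 0" using deg by simp
    ultimately show ?thesis by linarith
  qed
  have eqC: "poly L (x k) = poly q (x k)" if k: "k \<in> C" for k
  proof -
    have "poly L (x k) = (\<Sum>a\<in>C. (\<Prod>m\<in>C-{a}. (x k - x m)) / (\<Prod>m\<in>C-{a}. (x a - x m)) * poly q (x a))"
      by (rule polyL)
    also have "\<dots> = (\<Prod>m\<in>C-{k}. (x k - x m)) / (\<Prod>m\<in>C-{k}. (x k - x m)) * poly q (x k)
       + (\<Sum>a\<in>C-{k}. (\<Prod>m\<in>C-{a}. (x k - x m)) / (\<Prod>m\<in>C-{a}. (x a - x m)) * poly q (x a))"
      by (rule sum.remove[OF fin k])
    also have "(\<Sum>a\<in>C-{k}. (\<Prod>m\<in>C-{a}. (x k - x m)) / (\<Prod>m\<in>C-{a}. (x a - x m)) * poly q (x a)) = 0"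
    proof (rule sum.neutral, rule ballI)
      fix i assume "i \<in> C - {k}"
      hence "k \<in> C - {i}" using k by auto
      hence "(\<Prod>m\<in>C - {i}. x k - x m) = 0" using fin by (intro prod_zero) auto
      thus "(\<Prod>m\<in>C-{i}. (x k - x m)) / (\<Prod>m\<in>C-{i}. (x i - x m)) * poly q (x i) = 0" by simp
    qed
    also have "(\<Prod>m\<in>C-{k}. (x k - x m)) \<noteq> 0"
      using fin inj k by (subst prod_zero_iff) (auto dest: inj_onD)
    hence "(\<Prod>m\<in>C-{k}. (x k - x m)) / (\<Prod>m\<in>C-{k}. (x k - x m)) * poly q (x k) + 0 = poly q (x k)" by simp
    finally show ?thesis .
  qed
  have cardA: "card (x ` C) = card C" using inj by (rule card_image)
  have "L = q"
    by (rule poly_eqI_degree[of "x ` C"]) (use eqC cardA degL deg in auto)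
  thus ?thesis using polyL[of z] by simp
qed

definition sg :: "nat \<Rightarrow> nat \<Rightarrow> real" where "sg m a = (if m < a then 1 else -1)"

definition prs :: "nat set \<Rightarrow> (nat \<times> nat) set" where
  "prs S = {(k,l). k \<in> S \<and> l \<in> S \<and> k < l}"

definition V :: "nat set \<Rightarrow> (nat \<Rightarrow> real) \<Rightarrow> real" where
  "V S x = (\<Prod>p\<in>prs S. x (fst p) - x (snd p))"

lemma finite_prs: "finite S \<Longrightarrow> finite (prs S)"
  unfolding prs_def by (rule finite_subset[of _ "S \<times> S"]) auto

lemma V_local: "(\<And>k. k \<in> S \<Longrightarrow> x k = y k) \<Longrightarrow> V S x = V S y"
  unfolding V_def prs_def by (intro prod.cong) auto

lemma V_remove:
  assumes fin: "finite S" and a: "a \<in> S"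
  shows "V S x = V (S - {a}) x * (\<Prod>m\<in>S-{a}. sg m a * (x m - x a))"
proof -
  let ?A = "prs (S - {a})"
  let ?B = "(\<lambda>m. (m,a)) ` {m\<in>S-{a}. m < a}"
  let ?C = "(\<lambda>m. (a,m)) ` {m\<in>S-{a}. a < m}"
  have split: "prs S = ?A \<union> (?B \<union> ?C)" using a unfolding prs_def by auto
  have finA: "finite ?A" using fin by (intro finite_prs) auto
  have finB: "finite ?B" "finite ?C" using fin by auto
  have disj: "?A \<inter> (?B \<union> ?C) = {}" "?B \<inter> ?C = {}" unfolding prs_def by auto
  let ?f = "\<lambda>p. x (fst p) - x (snd p)"
  have "V S x = prod ?f ?A * (prod ?f ?B * prod ?f ?C)"
    unfolding V_def split using finA finB disj
    by (simp add: prod.union_disjoint)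
  also have "prod ?f ?B = (\<Prod>m\<in>{m\<in>S-{a}. m < a}. x m - x a)"
    by (subst prod.reindex) (auto simp: inj_on_def)
  also have "prod ?f ?C = (\<Prod>m\<in>{m\<in>S-{a}. a < m}. x a - x m)"
    by (subst prod.reindex) (auto simp: inj_on_def)
  also have "(\<Prod>m\<in>{m\<in>S-{a}. m < a}. x m - x a) = (\<Prod>m\<in>{m\<in>S-{a}. m < a}. sg m a * (x m - x a))"
    by (intro prod.cong) (auto simp: sg_def)
  also have "(\<Prod>m\<in>{m\<in>S-{a}. a < m}. x a - x m) = (\<Prod>m\<in>{m\<in>S-{a}. a < m}. sg m a * (x m - x a))"
    by (intro prod.cong) (auto simp: sg_def)
  also have "(\<Prod>m\<in>{m\<in>S-{a}. m < a}. sg m a * (x m - x a)) * (\<Prod>m\<in>{m\<in>S-{a}. a < m}. sg m a * (x m - x a))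
      = (\<Prod>m\<in>S-{a}. sg m a * (x m - x a))"
  proof -
    have "S - {a} = {m\<in>S-{a}. m < a} \<union> {m\<in>S-{a}. a < m}" by auto
    moreover have "{m\<in>S-{a}. m < a} \<inter> {m\<in>S-{a}. a < m} = {}" by auto
    ultimately show ?thesis using fin
      by (metis (no_types, lifting) finite_Diff finite_Un prod.union_disjoint)
  qed
  finally show ?thesis unfolding V_def by simp
qed

lemma V_nonzero:
  assumes "finite S" "inj_on x S"
  shows "V S x \<noteq> 0"
  unfolding V_def using assms finite_prs[OF assms(1)]
  by (subst prod_zero_iff) (auto simp: prs_def dest: inj_onD)

lemma V_two:
  assumes fin: "finite S" and a: "a \<in> S" and b: "b \<in> S" and ab: "a \<noteq> b"
  shows "V S y = V (S-{a}-{b}) y * (sg b a * (y b - y a)) *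
     (\<Prod>m\<in>S-{a}-{b}. sg m b * (y m - y b) * (sg m a * (y m - y a)))"
proof -
  have b': "b \<in> S - {a}" using b ab by auto
  have "V S y = V (S - {a}) y * (\<Prod>m\<in>S-{a}. sg m a * (y m - y a))"
    by (rule V_remove[OF fin a])
  also have "V (S - {a}) y = V (S-{a}-{b}) y * (\<Prod>m\<in>S-{a}-{b}. sg m b * (y m - y b))"
    using fin b' by (intro V_remove) auto
  also have "(\<Prod>m\<in>S-{a}. sg m a * (y m - y a)) = sg b a * (y b - y a) * (\<Prod>m\<in>S-{a}-{b}. sg m a * (y m - y a))"
    using fin b' by (subst prod.remove[of _ b]) auto
  finally show ?thesis by (simp add: prod.distrib mult_ac)
qed

lemma V_swap:
  assumes fin: "finite S" and a: "a \<in> S" and b: "b \<in> S" and ab: "a \<noteq> b"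
  shows "V S (x \<circ> transpose a b) = - V S x"
proof -
  let ?y = "x \<circ> transpose a b"
  have 1: "V (S-{a}-{b}) ?y = V (S-{a}-{b}) x" by (rule V_local) (auto simp: transpose_def)
  have 2: "(\<Prod>m\<in>S-{a}-{b}. sg m b * (?y m - ?y b) * (sg m a * (?y m - ?y a)))
     = (\<Prod>m\<in>S-{a}-{b}. sg m b * (x m - x b) * (sg m a * (x m - x a)))"
    by (rule prod.cong) (auto simp: transpose_def algebra_simps)
  have 3: "?y b - ?y a = - (x b - x a)" by (simp add: transpose_def)
  show ?thesis
    using V_two[OF fin a b ab, of ?y] V_two[OF fin a b ab, of x] 1 2 3 by (simp add: algebra_simps)
qed

lemma V_upd:
  assumes fin: "finite S" and a: "a \<in> S"
  shows "V S (x(a:=t)) = V (S-{a}) x * (\<Prod>m\<in>S-{a}. - sg m a) * (\<Prod>m\<in>S-{a}. (t - x m))"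
proof -
  have "V S (x(a:=t)) = V (S - {a}) (x(a:=t)) * (\<Prod>m\<in>S-{a}. sg m a * ((x(a:=t)) m - (x(a:=t)) a))"
    by (rule V_remove[OF fin a])
  also have "V (S - {a}) (x(a:=t)) = V (S - {a}) x" by (rule V_local) auto
  also have "(\<Prod>m\<in>S-{a}. sg m a * ((x(a:=t)) m - (x(a:=t)) a)) = (\<Prod>m\<in>S-{a}. (- sg m a) * (t - x m))"
    by (rule prod.cong) (auto simp: algebra_simps)
  also have "\<dots> = (\<Prod>m\<in>S-{a}. - sg m a) * (\<Prod>m\<in>S-{a}. (t - x m))"
    by (rule prod.distrib)
  finally show ?thesis by (simp only: mult_ac)
qed

lemma V_upd_ratio:
  assumes fin: "finite S" and a: "a \<in> S" and inj: "inj_on x S"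
  shows "V S (x(a:=t)) = V S x * ((\<Prod>m\<in>S-{a}. (t - x m)) / (\<Prod>m\<in>S-{a}. (x a - x m)))"
proof -
  have nz: "(\<Prod>m\<in>S-{a}. (x a - x m)) \<noteq> 0"
    using fin inj a by (subst prod_zero_iff) (auto dest: inj_onD)
  have e1: "V S (x(a:=t)) = V (S-{a}) x * (\<Prod>m\<in>S-{a}. - sg m a) * (\<Prod>m\<in>S-{a}. (t - x m))"
    by (rule V_upd[OF fin a])
  have e2: "V S x = V (S-{a}) x * (\<Prod>m\<in>S-{a}. - sg m a) * (\<Prod>m\<in>S-{a}. (x a - x m))"
    using V_upd[OF fin a, of x "x a"] by simp
  show ?thesis unfolding e1 e2 using nz by (simp add: field_simps)
qed

lemma V_cross:
  assumes finC: "finite C" and finD: "finite D" and disj: "C \<inter> D = {}" and b: "b \<in> D"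
    and card: "card D \<le> card C" and inj: "inj_on x (C \<union> D)"
  shows "(\<Sum>a\<in>C. V C (x(a := x b)) * V D (x(b := x a))) = V C x * V D x"
proof -
  define q where "q = (\<Prod>m\<in>D-{b}. [:- x m, 1:])"
  define \<kappa> where "\<kappa> = V (D-{b}) x * (\<Prod>m\<in>D-{b}. - sg m b)"
  have Dq: "V D (x(b:=t)) = \<kappa> * poly q t" for t
    unfolding \<kappa>_def q_def by (subst V_upd[OF finD b]) (simp add: poly_prod mult_ac)
  have degq: "degree q < card C"
  proof -
    have "degree q \<le> (\<Sum>m\<in>D-{b}. degree [:- x m, 1:])"
      unfolding q_def using degree_prod_sum_le[of "D-{b}" "\<lambda>m. [:- x m, 1:]"] finD by (simp add: o_def)
    also have "\<dots> = card D - 1" using finD b by simp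
    finally show ?thesis using card b finD by (metis card_gt_0_iff diff_less empty_iff le_less_trans less_one not_le)
  qed
  have injC: "inj_on x C" using inj by (rule inj_on_subset) auto
  have "(\<Sum>a\<in>C. V C (x(a := x b)) * V D (x(b := x a)))
      = (\<Sum>a\<in>C. V C x * ((\<Prod>m\<in>C-{a}. (x b - x m)) / (\<Prod>m\<in>C-{a}. (x a - x m))) * (\<kappa> * poly q (x a)))"
    by (rule sum.cong) (auto simp: V_upd_ratio[OF finC _ injC] Dq)
  also have "\<dots> = V C x * \<kappa> * (\<Sum>a\<in>C. (\<Prod>m\<in>C-{a}. (x b - x m)) / (\<Prod>m\<in>C-{a}. (x a - x m)) * poly q (x a))"
    by (simp add: sum_distrib_left mult_ac)
  also have "(\<Sum>a\<in>C. (\<Prod>m\<in>C-{a}. (x b - x m)) / (\<Prod>m\<in>C-{a}. (x a - x m)) * poly q (x a)) = poly q (x b)"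
    by (rule lagrange_interp[OF finC injC degq])
  also have "V C x * \<kappa> * poly q (x b) = V C x * V D x" using Dq[of "x b"] by simp
  finally show ?thesis .
qed



definition Dl :: "nat \<Rightarrow> (nat \<Rightarrow> nat set) \<Rightarrow> (nat \<Rightarrow> real) \<Rightarrow> real" where
  "Dl K C x = (\<Prod>c<K. V (C c) x)"

definition MM :: "nat \<Rightarrow> (nat \<Rightarrow> nat set) \<Rightarrow> real" where
  "MM K C = (\<Sum>c<K. \<Sum>d<K. if c = d then - (real (card (C c)) * (real (card (C c)) - 1))
                              else real (min (card (C c)) (card (C d))))"

lemma Dl_split2:
  assumes "c < K" "d < K" "c \<noteq> d"
  shows "Dl K C y = V (C c) y * V (C d) y * (\<Prod>e\<in>{..<K}-{c}-{d}. V (C e) y)"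
proof -
  have "Dl K C y = V (C c) y * (\<Prod>e\<in>{..<K}-{c}. V (C e) y)"
    unfolding Dl_def using assms by (subst prod.remove[of _ c]) auto
  also have "(\<Prod>e\<in>{..<K}-{c}. V (C e) y) = V (C d) y * (\<Prod>e\<in>{..<K}-{c}-{d}. V (C e) y)"
    using assms by (subst prod.remove[of _ d]) auto
  finally show ?thesis by (simp add: mult_ac)
qed

lemma Dl_split1:
  assumes "c < K"
  shows "Dl K C y = V (C c) y * (\<Prod>e\<in>{..<K}-{c}. V (C e) y)"
  unfolding Dl_def using assms by (subst prod.remove[of _ c]) auto

locale colsys =
  fixes n K :: nat and C :: "nat \<Rightarrow> nat set"
  assumes disj: "\<And>c d. c < K \<Longrightarrow> d < K \<Longrightarrow> c \<noteq> d \<Longrightarrow> C c \<inter> C d = {}"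
    and union: "(\<Union>c<K. C c) = {..<n}"
begin

lemma finC: "c < K \<Longrightarrow> finite (C c)"
  using union by (metis UN_upper finite_lessThan finite_subset lessThan_iff)

lemma same_col:
  assumes c: "c < K" and a: "a \<in> C c" and b: "b \<in> C c" and ab: "a \<noteq> b"
  shows "Dl K C (x \<circ> transpose a b) = - Dl K C x"
proof -
  have "(\<Prod>e\<in>{..<K}-{c}. V (C e) (x \<circ> transpose a b)) = (\<Prod>e\<in>{..<K}-{c}. V (C e) x)"
  proof (rule prod.cong, simp)
    fix e assume e: "e \<in> {..<K}-{c}"
    hence "a \<notin> C e" "b \<notin> C e" using disj[of c e] a b c by auto
    thus "V (C e) (x \<circ> transpose a b) = V (C e) x"
      by (intro V_local) (auto simp: transpose_def)
  qed
  moreover have "V (C c) (x \<circ> transpose a b) = - V (C c) x"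
    by (rule V_swap[OF finC[OF c] a b ab])
  ultimately show ?thesis using Dl_split1[OF c, of C] by (simp add: Dl_split1[OF c])
qed

lemma cross_term:
  assumes c: "c < K" and d: "d < K" and cd: "c \<noteq> d" and a: "a \<in> C c" and b: "b \<in> C d"
  shows "Dl K C (x \<circ> transpose a b) =
     V (C c) (x(a := x b)) * V (C d) (x(b := x a)) * (\<Prod>e\<in>{..<K}-{c}-{d}. V (C e) x)"
proof -
  have nb: "b \<notin> C c" and na: "a \<notin> C d" using disj[OF c d cd] a b by auto
  have "(\<Prod>e\<in>{..<K}-{c}-{d}. V (C e) (x \<circ> transpose a b)) = (\<Prod>e\<in>{..<K}-{c}-{d}. V (C e) x)"
  proof (rule prod.cong, simp)
    fix e assume e: "e \<in> {..<K}-{c}-{d}"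
    hence "a \<notin> C e" "b \<notin> C e" using disj[of c e] disj[of d e] a b c d by auto
    thus "V (C e) (x \<circ> transpose a b) = V (C e) x"
      by (intro V_local) (auto simp: transpose_def)
  qed
  moreover have "V (C c) (x \<circ> transpose a b) = V (C c) (x(a := x b))"
    using nb by (intro V_local) (auto simp: transpose_def)
  moreover have "V (C d) (x \<circ> transpose a b) = V (C d) (x(b := x a))"
    using na by (intro V_local) (auto simp: transpose_def)
  ultimately show ?thesis using Dl_split2[OF c d cd, of C "x \<circ> transpose a b"] by simp
qed

lemma cross_sum:
  assumes c: "c < K" and d: "d < K" and cd: "c \<noteq> d" and inj: "inj_on x {..<n}"
  shows "(\<Sum>a\<in>C c. \<Sum>b\<in>C d. Dl K C (x \<circ> transpose a b))
     = real (min (card (C c)) (card (C d))) * Dl K C x"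
proof -
  let ?R = "(\<Prod>e\<in>{..<K}-{c}-{d}. V (C e) x)"
  let ?G = "\<lambda>a b. V (C c) (x(a := x b)) * V (C d) (x(b := x a))"
  have injcd: "inj_on x (C c \<union> C d)" "inj_on x (C d \<union> C c)"
    using inj union c d by (auto intro: inj_on_subset)
  have dj: "C c \<inter> C d = {}" "C d \<inter> C c = {}" using disj[OF c d cd] by auto
  have "(\<Sum>a\<in>C c. \<Sum>b\<in>C d. Dl K C (x \<circ> transpose a b)) = (\<Sum>a\<in>C c. \<Sum>b\<in>C d. ?G a b) * ?R"
    by (simp add: cross_term[OF c d cd] sum_distrib_right)
  also have "(\<Sum>a\<in>C c. \<Sum>b\<in>C d. ?G a b) = real (min (card (C c)) (card (C d))) * (V (C c) x * V (C d) x)"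
  proof (cases "card (C d) \<le> card (C c)")
    case True
    have "(\<Sum>a\<in>C c. \<Sum>b\<in>C d. ?G a b) = (\<Sum>b\<in>C d. \<Sum>a\<in>C c. ?G a b)" by (rule sum.swap)
    also have "\<dots> = (\<Sum>b\<in>C d. V (C c) x * V (C d) x)"
      by (rule sum.cong[OF refl], rule V_cross[OF finC[OF c] finC[OF d] dj(1) _ True injcd(1)])
    finally show ?thesis using True by simp
  next
    case False
    have "(\<Sum>a\<in>C c. \<Sum>b\<in>C d. ?G a b) = (\<Sum>a\<in>C c. V (C c) x * V (C d) x)"
    proof (rule sum.cong[OF refl])
      fix a assume a: "a \<in> C c"
      have "(\<Sum>b\<in>C d. V (C d) (x(b := x a)) * V (C c) (x(a := x b))) = V (C d) x * V (C c) x"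
        by (rule V_cross[OF finC[OF d] finC[OF c] dj(2) a _ injcd(2)]) (use False in simp)
      thus "(\<Sum>b\<in>C d. ?G a b) = V (C c) x * V (C d) x" by (simp add: mult_ac)
    qed
    thus ?thesis using False by simp
  qed
  finally have eq: "(\<Sum>a\<in>C c. \<Sum>b\<in>C d. Dl K C (x \<circ> transpose a b)) =
     real (min (card (C c)) (card (C d))) * (V (C c) x * V (C d) x) * ?R" .
  show ?thesis by (subst eq, subst Dl_split2[OF c d cd, of C x], simp only: mult_ac)
qed

lemma same_sum:
  assumes c: "c < K"
  shows "(\<Sum>a\<in>C c. \<Sum>b\<in>C c - {a}. Dl K C (x \<circ> transpose a b))
     = - (real (card (C c)) * (real (card (C c)) - 1)) * Dl K C x"
proof -
  have "(\<Sum>a\<in>C c. \<Sum>b\<in>C c - {a}. Dl K C (x \<circ> transpose a b))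
      = (\<Sum>a\<in>C c. \<Sum>b\<in>C c - {a}. - Dl K C x)"
    by (intro sum.cong refl) (auto intro: same_col[OF c])
  also have "\<dots> = (\<Sum>a\<in>C c. - (real (card (C c)) - 1) * Dl K C x)"
  proof (rule sum.cong[OF refl])
    fix a assume a: "a \<in> C c"
    have "card (C c - {a}) = card (C c) - 1" using a finC[OF c] by simp
    moreover have "card (C c) \<ge> 1" using a finC[OF c] by (metis One_nat_def Suc_leI card_gt_0_iff empty_iff)
    ultimately show "(\<Sum>b\<in>C c - {a}. - Dl K C x) = - (real (card (C c)) - 1) * Dl K C x"
      by (simp add: of_nat_diff algebra_simps)
  qed
  also have "\<dots> = - (real (card (C c)) * (real (card (C c)) - 1)) * Dl K C x" by (simp add: algebra_simps)
  finally show ?thesis .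
qed

theorem main_sum:
  assumes inj: "inj_on x {..<n}"
  shows "(\<Sum>a<n. \<Sum>b\<in>{..<n}-{a}. Dl K C (x \<circ> transpose a b)) = MM K C * Dl K C x"
proof -
  let ?F = "\<lambda>a b. Dl K C (x \<circ> transpose a b)"
  have U: "(\<Sum>a<n. f a) = (\<Sum>c<K. \<Sum>a\<in>C c. f a)" for f :: "nat \<Rightarrow> real"
  proof -
    have "(\<Sum>a<n. f a) = sum f (\<Union>c<K. C c)" using union by simp
    also have "\<dots> = (\<Sum>c<K. sum f (C c))"
      by (rule sum.UNION_disjoint) (auto simp: finC dest: disj)
    finally show ?thesis .
  qed
  have U2: "(\<Sum>b\<in>{..<n}-{a}. f b) = (\<Sum>d<K. \<Sum>b\<in>C d - {a}. f b)" for f :: "nat \<Rightarrow> real" and a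
  proof -
    have "{..<n}-{a} = (\<Union>d<K. C d - {a})" using union by auto
    hence "(\<Sum>b\<in>{..<n}-{a}. f b) = sum f (\<Union>d<K. C d - {a})" by simp
    also have "\<dots> = (\<Sum>d<K. sum f (C d - {a}))"
      by (rule sum.UNION_disjoint) (auto simp: finC dest: disj)
    finally show ?thesis .
  qed
  have "(\<Sum>a<n. \<Sum>b\<in>{..<n}-{a}. ?F a b) = (\<Sum>c<K. \<Sum>a\<in>C c. \<Sum>d<K. \<Sum>b\<in>C d - {a}. ?F a b)"
    by (simp add: U U2)
  also have "\<dots> = (\<Sum>c<K. \<Sum>d<K. \<Sum>a\<in>C c. \<Sum>b\<in>C d - {a}. ?F a b)"
    by (rule sum.cong[OF refl], rule sum.swap)
  also have "\<dots> = (\<Sum>c<K. \<Sum>d<K. (if c = d then - (real (card (C c)) * (real (card (C c)) - 1))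
                              else real (min (card (C c)) (card (C d)))) * Dl K C x)"
  proof (intro sum.cong refl)
    fix c d assume c: "c \<in> {..<K}" and d: "d \<in> {..<K}"
    show "(\<Sum>a\<in>C c. \<Sum>b\<in>C d - {a}. ?F a b) = (if c = d then - (real (card (C c)) * (real (card (C c)) - 1))
                              else real (min (card (C c)) (card (C d)))) * Dl K C x"
    proof (cases "c = d")
      case True thus ?thesis using same_sum c by simp
    next
      case False
      have "(\<Sum>a\<in>C c. \<Sum>b\<in>C d - {a}. ?F a b) = (\<Sum>a\<in>C c. \<Sum>b\<in>C d. ?F a b)"
        using disj[of c d] c d False by (intro sum.cong refl) auto
      thus ?thesis using cross_sum[of c d x] c d False inj by simp
    qed
  qed
  also have "\<dots> = MM K C * Dl K C x"
    unfolding MM_def by (simp add: sum_distrib_right)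
  finally show ?thesis .
qed

end



lemma finite_Sym: "finite (Sym n)"
  unfolding Sym_def by (rule finite_permutations) simp

lemma transp_Sym: "t \<in> transpositions n \<Longrightarrow> t permutes {0..<n}"
  unfolding transpositions_def by (auto intro: permutes_swap_id)

lemma adj_sum:
  assumes g: "g \<in> Sym n"
  shows "(\<Sum>h\<in>Sym n. cayley_adj (transpositions n) g h * F h) = (\<Sum>t\<in>transpositions n. F (g \<circ> t))"
proof -
  let ?T = "transpositions n"
  have gp: "g permutes {0..<n}" using g by (simp add: Sym_def)
  have sub: "(\<lambda>s. g \<circ> s) ` ?T \<subseteq> Sym n"
    using gp by (auto simp: Sym_def intro: permutes_compose transp_Sym)
  have "(\<Sum>h\<in>Sym n. cayley_adj ?T g h * F h) = (\<Sum>h\<in>Sym n. if h \<in> (\<lambda>s. g \<circ> s) ` ?T then F h else 0)"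
    by (intro sum.cong refl) (auto simp: cayley_adj_def)
  also have "\<dots> = (\<Sum>h\<in>{h \<in> Sym n. h \<in> (\<lambda>s. g \<circ> s) ` ?T}. F h)"
    by (rule sum.inter_filter[symmetric, OF finite_Sym])
  also have "{h \<in> Sym n. h \<in> (\<lambda>s. g \<circ> s) ` ?T} = (\<lambda>s. g \<circ> s) ` ?T" using sub by auto
  also have "(\<Sum>h\<in>(\<lambda>s. g \<circ> s) ` ?T. F h) = (\<Sum>t\<in>?T. F (g \<circ> t))"
  proof (rule sum.reindex[unfolded o_def])
    show "inj_on (\<lambda>s. g \<circ> s) ?T"
    proof (rule inj_onI)
      fix s s' assume "g \<circ> s = g \<circ> s'"
      thus "s = s'" using permutes_inj[OF gp] by (auto simp: fun_eq_iff dest: injD)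
    qed
  qed
  finally show ?thesis .
qed

lemma transpose_inj_pairs:
  fixes a b c d :: nat
  assumes "a < b" "c < d" "transpose a b = transpose c d"
  shows "a = c \<and> b = d"
proof -
  have 1: "transpose c d a = b" using assms by (metis transpose_apply_first)
  have 2: "transpose c d b = a" using assms by (metis transpose_apply_second)
  have "a = c \<or> a = d"
  proof (rule ccontr)
    assume "\<not> (a = c \<or> a = d)"
    hence "transpose c d a = a" by (simp add: transpose_apply_other)
    hence "a = b" using 1 by simp
    thus False using assms(1) by simp
  qed
  moreover have "b = c \<or> b = d"
  proof (rule ccontr)
    assume "\<not> (b = c \<or> b = d)"
    hence "transpose c d b = b" by (simp add: transpose_apply_other)
    hence "a = b" using 2 by simp
    thus False using assms(1) by simp
  qed
  ultimately show ?thesis using assms(1,2) by auto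
qed

lemma trans_sum:
  fixes G :: "(nat \<Rightarrow> nat) \<Rightarrow> real"
  shows "(\<Sum>t\<in>transpositions n. G t) = (\<Sum>a<n. \<Sum>b\<in>{..<n}-{a}. G (transpose a b)) / 2"
proof -
  let ?P = "{(a,b). a < b \<and> b < n}"
  let ?H = "\<lambda>a b. G (transpose a b)"
  have finP: "finite ?P" by (rule finite_subset[of _ "{..<n} \<times> {..<n}"]) auto
  have T: "transpositions n = (\<lambda>p. transpose (fst p) (snd p)) ` ?P"
  proof
    show "transpositions n \<subseteq> (\<lambda>p. transpose (fst p) (snd p)) ` ?P"
    proof
      fix t assume "t \<in> transpositions n"
      then obtain a b where ab: "a < n" "b < n" "a \<noteq> b" "t = transpose a b"
        unfolding transpositions_def by auto
      show "t \<in> (\<lambda>p. transpose (fst p) (snd p)) ` ?P"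
      proof (cases "a < b")
        case True thus ?thesis using ab by (auto intro!: image_eqI[of _ _ "(a,b)"])
      next
        case False thus ?thesis using ab
          by (auto intro!: image_eqI[of _ _ "(b,a)"] simp: transpose_commute)
      qed
    qed
    show "(\<lambda>p. transpose (fst p) (snd p)) ` ?P \<subseteq> transpositions n"
    proof
      fix t assume "t \<in> (\<lambda>p. transpose (fst p) (snd p)) ` ?P"
      then obtain a b where "a < b" "b < n" "t = transpose a b" by auto
      hence "a < n" "b < n" "a \<noteq> b" "t = transpose a b" by auto
      thus "t \<in> transpositions n" unfolding transpositions_def by blast
    qed
  qed
  have inj: "inj_on (\<lambda>p. transpose (fst p) (snd p)) ?P"
    by (rule inj_onI) (auto dest: transpose_inj_pairs)
  have 1: "(\<Sum>t\<in>transpositions n. G t) = (\<Sum>p\<in>?P. ?H (fst p) (snd p))"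
    unfolding T by (subst sum.reindex[OF inj]) (simp add: o_def)
  let ?Q = "Sigma {..<n} (\<lambda>a. {..<n}-{a})"
  have 2: "(\<Sum>a<n. \<Sum>b\<in>{..<n}-{a}. ?H a b) = (\<Sum>p\<in>?Q. ?H (fst p) (snd p))"
    by (subst sum.Sigma) (auto simp: case_prod_beta)
  have Q: "?Q = ?P \<union> prod.swap ` ?P" by auto
  have dj: "?P \<inter> prod.swap ` ?P = {}" by auto
  have 3: "(\<Sum>p\<in>prod.swap ` ?P. ?H (fst p) (snd p)) = (\<Sum>p\<in>?P. ?H (fst p) (snd p))"
    by (subst sum.reindex) (auto simp: transpose_commute)
  have "(\<Sum>p\<in>?Q. ?H (fst p) (snd p)) = 2 * (\<Sum>p\<in>?P. ?H (fst p) (snd p))"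
    unfolding Q using finP dj 3 by (subst sum.union_disjoint) auto
  thus ?thesis using 1 2 by simp
qed

context colsys
begin

lemma Dl_nonzero: "Dl K C real \<noteq> 0"
  unfolding Dl_def using V_nonzero[OF finC, of _ real]
  by (subst prod_zero_iff) (auto simp: inj_on_def)

theorem eigen_pos: "is_eigenvalue (Sym n) (cayley_adj (transpositions n)) (MM K C / 2)"
  unfolding is_eigenvalue_def
proof (intro exI conjI ballI)
  let ?f = "\<lambda>g. Dl K C (real \<circ> g)"
  show "\<exists>v\<in>Sym n. ?f v \<noteq> 0"
    by (rule bexI[of _ id]) (auto simp: Sym_def Dl_nonzero o_def permutes_id)
  fix u assume u: "u \<in> Sym n"
  have up: "u permutes {0..<n}" using u by (simp add: Sym_def)
  have inj: "inj_on (real \<circ> u) {..<n}"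
    using permutes_inj[OF up] by (auto simp: inj_on_def dest: injD)
  have "(\<Sum>w\<in>Sym n. cayley_adj (transpositions n) u w * ?f w) = (\<Sum>t\<in>transpositions n. ?f (u \<circ> t))"
    by (rule adj_sum[OF u])
  also have "\<dots> = (\<Sum>a<n. \<Sum>b\<in>{..<n}-{a}. Dl K C ((real \<circ> u) \<circ> transpose a b)) / 2"
    by (subst trans_sum) (simp add: o_assoc)
  also have "\<dots> = MM K C / 2 * ?f u" using main_sum[OF inj] by simp
  finally show "(\<Sum>w\<in>Sym n. cayley_adj (transpositions n) u w * ?f w) = MM K C / 2 * ?f u" .
qed

theorem eigen_neg: "is_eigenvalue (Sym n) (cayley_adj (transpositions n)) (- (MM K C / 2))"
  unfolding is_eigenvalue_def
proof (intro exI conjI ballI)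
  let ?f = "\<lambda>g. real_of_int (sign g) * Dl K C (real \<circ> g)"
  show "\<exists>v\<in>Sym n. ?f v \<noteq> 0"
    by (rule bexI[of _ id]) (auto simp: Sym_def Dl_nonzero o_def permutes_id)
  fix u assume u: "u \<in> Sym n"
  have up: "u permutes {0..<n}" using u by (simp add: Sym_def)
  have perm: "permutation u" using up by (auto intro: permutes_imp_permutation)
  have inj: "inj_on (real \<circ> u) {..<n}"
    using permutes_inj[OF up] by (auto simp: inj_on_def dest: injD)
  have sg: "sign (u \<circ> transpose a b) = - sign u" if "a \<noteq> b" for a b
    using that by (simp add: sign_compose[OF perm permutation_swap_id] sign_swap_id)
  have "(\<Sum>w\<in>Sym n. cayley_adj (transpositions n) u w * ?f w) = (\<Sum>t\<in>transpositions n. ?f (u \<circ> t))"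
    by (rule adj_sum[OF u])
  also have "\<dots> = (\<Sum>a<n. \<Sum>b\<in>{..<n}-{a}. ?f (u \<circ> transpose a b)) / 2"
    by (rule trans_sum)
  also have "(\<Sum>a<n. \<Sum>b\<in>{..<n}-{a}. ?f (u \<circ> transpose a b))
     = (\<Sum>a<n. \<Sum>b\<in>{..<n}-{a}. - real_of_int (sign u) * Dl K C ((real \<circ> u) \<circ> transpose a b))"
    by (intro sum.cong refl) (auto simp: sg o_assoc)
  also have "\<dots> = - real_of_int (sign u) * (\<Sum>a<n. \<Sum>b\<in>{..<n}-{a}. Dl K C ((real \<circ> u) \<circ> transpose a b))"
    by (simp add: sum_distrib_left)
  also have "\<dots> = - real_of_int (sign u) * (MM K C * Dl K C (real \<circ> u))" using main_sum[OF inj] by simp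
  finally have X: "(\<Sum>w\<in>Sym n. cayley_adj (transpositions n) u w * ?f w)
      = - real_of_int (sign u) * (MM K C * Dl K C (real \<circ> u)) / 2" .
  show "(\<Sum>w\<in>Sym n. cayley_adj (transpositions n) u w * ?f w) = - (MM K C / 2) * ?f u"
    unfolding X by (simp add: algebra_simps)
qed

end



primrec ER2 :: "nat list \<Rightarrow> int" where
  "ER2 [] = 0"
| "ER2 (a#cs) = ER2 cs + 2 * (\<Sum>c\<leftarrow>cs. int (min a c)) - int a * (int a - 1)"

lemma ER2_append:
  "ER2 (xs @ ys) = ER2 xs + ER2 ys + 2 * (\<Sum>x\<leftarrow>xs. \<Sum>y\<leftarrow>ys. int (min x y))"
  by (induction xs) (auto simp: algebra_simps)

lemma ER2_map_Suc:
  "ER2 (map Suc r) = ER2 r + int (length r) * (int (length r) - 1) - 2 * int (sum_list r)"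
proof (induction r)
  case Nil thus ?case by simp
next
  case (Cons a r)
  have "(\<Sum>c\<leftarrow>map Suc r. int (min (Suc a) c)) = (\<Sum>c\<leftarrow>r. int (min a c)) + int (length r)"
    by (induction r) auto
  thus ?case using Cons by (simp add: algebra_simps)
qed

lemma ER2_rep1: "ER2 (replicate k (Suc 0)) = int k * (int k - 1)"
proof (induction k)
  case 0 thus ?case by simp
next
  case (Suc k)
  have "(\<Sum>c\<leftarrow>replicate k (Suc 0). int (min (Suc 0) c)) = int k"
    by (induction k) auto
  thus ?case using Suc by (simp add: algebra_simps)
qed

lemma cross_rep1: "(\<Sum>x\<leftarrow>map Suc r. \<Sum>y\<leftarrow>replicate k (Suc 0). int (min x y)) = int (length r) * int k"
proof -
  have "(\<Sum>y\<leftarrow>replicate k (Suc 0). int (min (Suc x) y)) = int k" for x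
    by (induction k) auto
  thus ?thesis by (induction r) (auto simp: algebra_simps)
qed

lemma min_sum_top:
  assumes "\<forall>c\<in>set r. c \<le> b"
  shows "(\<Sum>c\<leftarrow>map Suc r @ replicate k (Suc 0). int (min (Suc b) c)) = int (sum_list r) + int (length r) + int k"
proof -
  have 1: "(\<Sum>c\<leftarrow>map Suc r. int (min (Suc b) c)) = int (sum_list r) + int (length r)"
    using assms by (induction r) auto
  have 2: "(\<Sum>c\<leftarrow>replicate k (Suc 0). int (min (Suc b) c)) = int k"
    by (induction k) auto
  show ?thesis using 1 2 by simp
qed

fun frob :: "(nat \<times> nat) list \<Rightarrow> nat list" where
  "frob [] = []"
| "frob ((a,b)#hs) = Suc b # map Suc (frob hs) @ replicate (a - length (frob hs)) (Suc 0)"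

fun fv :: "(nat \<times> nat) list \<Rightarrow> bool" where
  "fv [] = True"
| "fv ((a,b)#hs) = (fv hs \<and> length (frob hs) \<le> a \<and> (\<forall>c\<in>set (frob hs). c \<le> b))"

lemma len_frob: "fv ((a,b)#hs) \<Longrightarrow> length (frob ((a,b)#hs)) = Suc a"
  by auto

lemma set_frob: "fv ((a,b)#hs) \<Longrightarrow> c \<in> set (frob ((a,b)#hs)) \<Longrightarrow> c \<le> Suc b"
  by (auto simp: in_set_replicate split: if_splits)

lemma fv_cons2: "fv ((a,b)#(a',b')#hs) \<longleftrightarrow> fv ((a',b')#hs) \<and> a' < a \<and> b' < b"
proof
  assume H: "fv ((a,b)#(a',b')#hs)"
  hence F: "fv ((a',b')#hs)" by simp
  have "Suc b' \<in> set (frob ((a',b')#hs))" by simp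
  thus "fv ((a',b')#hs) \<and> a' < a \<and> b' < b" using H F len_frob[OF F] by auto
next
  assume H: "fv ((a',b')#hs) \<and> a' < a \<and> b' < b"
  thus "fv ((a,b)#(a',b')#hs)" using len_frob[of a' b' hs] set_frob[of a' b' hs] by force
qed

lemma fv_single: "fv [(a,b)]" by simp

lemma sum_list_map_Suc: "sum_list (map Suc xs) = sum_list xs + length xs"
  by (induction xs) auto

lemma sum_frob: "fv hs \<Longrightarrow> sum_list (frob hs) = (\<Sum>(a,b)\<leftarrow>hs. a + b + 1)"
proof (induction hs rule: frob.induct)
  case 1 thus ?case by simp
next
  case (2 a b hs)
  thus ?case by (auto simp: sum_list_map_Suc sum_list_replicate)
qed

lemma ER2_frob: "fv hs \<Longrightarrow> ER2 (frob hs) = (\<Sum>(a,b)\<leftarrow>hs. int a * (int a + 1) - int b * (int b + 1))"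
proof (induction hs rule: frob.induct)
  case 1 thus ?case by simp
next
  case (2 a b hs)
  let ?r = "frob hs" and ?L = "length (frob hs)"
  define k where "k = a - ?L"
  have Lk: "?L + k = a" using 2 k_def by simp
  have bnd: "\<forall>c\<in>set ?r. c \<le> b" using 2 by simp
  have "ER2 (frob ((a,b)#hs)) = ER2 (map Suc ?r @ replicate k (Suc 0))
      + 2 * (int (sum_list ?r) + int ?L + int k) - int (Suc b) * (int (Suc b) - 1)"
    using min_sum_top[OF bnd, of k] by (simp add: k_def)
  also have "ER2 (map Suc ?r @ replicate k (Suc 0)) = ER2 ?r + int ?L * (int ?L - 1) - 2 * int (sum_list ?r)
      + int k * (int k - 1) + 2 * (int ?L * int k)"
    unfolding ER2_append ER2_map_Suc ER2_rep1 cross_rep1 by (simp add: algebra_simps)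
  finally have "ER2 (frob ((a,b)#hs)) = ER2 ?r + int a * (int a + 1) - int b * (int b + 1)"
    using Lk[symmetric] by (simp add: algebra_simps)
  thus ?case using 2 by simp
qed



fun colsets :: "nat list \<Rightarrow> nat \<Rightarrow> nat set" where
  "colsets [] c = {}"
| "colsets (a#cs) c = (if c = 0 then {..<a} else (\<lambda>k. k + a) ` colsets cs (c - 1))"

lemma colsets_sub: "colsets cs c \<subseteq> {..<sum_list cs}"
proof (induction cs arbitrary: c)
  case Nil thus ?case by simp
next
  case (Cons a cs)
  show ?case using Cons[of "c - 1"] by auto
qed

lemma card_colsets: "c < length cs \<Longrightarrow> card (colsets cs c) = cs ! c"
proof (induction cs arbitrary: c)
  case Nil thus ?case by simp
next
  case (Cons a cs)
  show ?case
  proof (cases c)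
    case 0 thus ?thesis by simp
  next
    case (Suc c')
    have "card ((\<lambda>k. k + a) ` colsets cs c') = card (colsets cs c')"
      by (rule card_image) (auto simp: inj_on_def)
    thus ?thesis using Cons Suc by simp
  qed
qed

lemma colsys_colsets: "colsys (sum_list cs) (length cs) (colsets cs)"
proof (induction cs)
  case Nil thus ?case by (simp add: colsys_def)
next
  case (Cons a cs)
  interpret IH: colsys "sum_list cs" "length cs" "colsets cs" by (rule Cons)
  show ?case
  proof
    fix c d assume c: "c < length (a#cs)" and d: "d < length (a#cs)" and cd: "c \<noteq> d"
    show "colsets (a#cs) c \<inter> colsets (a#cs) d = {}"
    proof (cases "c = 0 \<or> d = 0")
      case True thus ?thesis using cd by auto
    next
      case False
      hence "colsets cs (c - 1) \<inter> colsets cs (d - 1) = {}"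
        using c d cd by (intro IH.disj) auto
      thus ?thesis using False by auto
    qed
  next
    have "(\<Union>c<length (a#cs). colsets (a#cs) c) = colsets (a#cs) 0 \<union> (\<Union>c<length cs. colsets (a#cs) (Suc c))"
      by (simp add: lessThan_Suc_eq_insert_0 UN_insert image_image del: colsets.simps) 
    also have "(\<Union>c<length cs. colsets (a#cs) (Suc c)) = (\<lambda>k. k + a) ` (\<Union>c<length cs. colsets cs c)"
      by auto
    also have "\<dots> = (\<lambda>k. k + a) ` {..<sum_list cs}" using IH.union by simp
    also have "colsets (a#cs) 0 \<union> (\<lambda>k. k + a) ` {..<sum_list cs} = {..<sum_list (a#cs)}"
    proof (rule set_eqI)
      fix x
      show "x \<in> colsets (a#cs) 0 \<union> (\<lambda>k. k + a) ` {..<sum_list cs} \<longleftrightarrow> x \<in> {..<sum_list (a#cs)}"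
      proof
        assume "x \<in> colsets (a#cs) 0 \<union> (\<lambda>k. k + a) ` {..<sum_list cs}"
        thus "x \<in> {..<sum_list (a#cs)}" by auto
      next
        assume x: "x \<in> {..<sum_list (a#cs)}"
        show "x \<in> colsets (a#cs) 0 \<union> (\<lambda>k. k + a) ` {..<sum_list cs}"
        proof (cases "x < a")
          case True thus ?thesis by simp
        next
          case False
          hence "x = (x - a) + a" "x - a \<in> {..<sum_list cs}" using x by auto
          thus ?thesis by (metis UnI2 image_eqI)
        qed
      qed
    qed
    finally show "(\<Union>c<length (a#cs). colsets (a#cs) c) = {..<sum_list (a#cs)}" .
  qed
qed

definition MMf :: "nat \<Rightarrow> (nat \<Rightarrow> nat) \<Rightarrow> real" where
  "MMf K s = (\<Sum>c<K. \<Sum>d<K. if c = d then - (real (s c) * (real (s c) - 1))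
                              else real (min (s c) (s d)))"

lemma MM_MMf: "MM K C = MMf K (\<lambda>c. card (C c))"
  unfolding MM_def MMf_def by simp

lemma MMf_cong: "(\<And>c. c < K \<Longrightarrow> s c = s' c) \<Longrightarrow> MMf K s = MMf K s'"
  unfolding MMf_def by (intro sum.cong refl) auto

lemma MMf_Suc:
  "MMf (Suc L) s = MMf L (\<lambda>c. s (Suc c)) + 2 * (\<Sum>d<L. real (min (s 0) (s (Suc d))))
     - real (s 0) * (real (s 0) - 1)"
proof -
  let ?F = "\<lambda>c d. if c = d then - (real (s c) * (real (s c) - 1)) else real (min (s c) (s d))"
  have "MMf (Suc L) s = (\<Sum>c<Suc L. ?F c 0 + (\<Sum>d<L. ?F c (Suc d)))"
    unfolding MMf_def by (simp only: sum.lessThan_Suc_shift)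
  also have "\<dots> = (?F 0 0 + (\<Sum>d<L. ?F 0 (Suc d))) + (\<Sum>c<L. ?F (Suc c) 0 + (\<Sum>d<L. ?F (Suc c) (Suc d)))"
    by (simp only: sum.lessThan_Suc_shift)
  also have "(\<Sum>d<L. ?F 0 (Suc d)) = (\<Sum>d<L. real (min (s 0) (s (Suc d))))" by simp
  also have "(\<Sum>c<L. ?F (Suc c) 0 + (\<Sum>d<L. ?F (Suc c) (Suc d)))
      = (\<Sum>c<L. real (min (s 0) (s (Suc c)))) + MMf L (\<lambda>c. s (Suc c))"
    unfolding MMf_def sum.distrib by (simp add: min.commute)
  finally show ?thesis by simp
qed

lemma MMf_list: "MMf (length cs) (\<lambda>c. cs ! c) = real_of_int (ER2 cs)"
proof (induction cs)
  case Nil thus ?case by (simp add: MMf_def)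
next
  case (Cons a cs)
  have "(\<Sum>d<length cs. real (min a (cs ! d))) = (\<Sum>c\<leftarrow>cs. real (min a c))"
    by (simp add: sum_list_sum_nth atLeast0LessThan)
  also have "\<dots> = real_of_int (\<Sum>c\<leftarrow>cs. int (min a c))"
    by (induction cs) auto
  finally have S: "(\<Sum>d<length cs. real (min a (cs ! d))) = real_of_int (\<Sum>c\<leftarrow>cs. int (min a c))" .
  show ?case using Cons S by (simp add: MMf_Suc)
qed

lemma MM_colsets: "MM (length cs) (colsets cs) = real_of_int (ER2 cs)"
  unfolding MM_MMf by (subst MMf_cong[of _ _ "\<lambda>c. cs ! c"]) (auto simp: card_colsets MMf_list)

lemma eigen_list:
  "is_eigenvalue (Sym (sum_list cs)) (cayley_adj (transpositions (sum_list cs))) (real_of_int (ER2 cs) / 2)"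
  "is_eigenvalue (Sym (sum_list cs)) (cayley_adj (transpositions (sum_list cs))) (- (real_of_int (ER2 cs) / 2))"
  using colsys.eigen_pos[OF colsys_colsets[of cs]] colsys.eigen_neg[OF colsys_colsets[of cs]]
  by (simp_all add: MM_colsets)



definition ok :: "nat \<Rightarrow> nat \<Rightarrow> bool" where
  "ok N k \<longleftrightarrow> (\<exists>hs. fv hs \<and> sum_list (frob hs) = N \<and> ER2 (frob hs) = 2 * int k)"

lemma ok_eigen:
  assumes "ok N k"
  shows "is_eigenvalue (Sym N) (cayley_adj (transpositions N)) (real k)"
    "is_eigenvalue (Sym N) (cayley_adj (transpositions N)) (- real k)"
proof -
  obtain hs where h: "fv hs" "sum_list (frob hs) = N" "ER2 (frob hs) = 2 * int k"
    using assms unfolding ok_def by blast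
  show "is_eigenvalue (Sym N) (cayley_adj (transpositions N)) (real k)"
    using eigen_list(1)[of "frob hs"] h by simp
  show "is_eigenvalue (Sym N) (cayley_adj (transpositions N)) (- real k)"
    using eigen_list(2)[of "frob hs"] h by simp
qed

lemma okI: "fv hs \<Longrightarrow> sum_list (frob hs) = N \<Longrightarrow> ER2 (frob hs) = 2 * int k \<Longrightarrow> ok N k"
  unfolding ok_def by blast

lemma F0: "ok (2*x+1) 0"
  by (rule okI[of "[(x,x)]"]) (simp_all add: fv_single sum_frob ER2_frob algebra_simps del: frob.simps fv.simps)

lemma FA: "Suc j < x \<Longrightarrow> ok (2*x+2*j+3) (Suc j)"
  by (rule okI[of "[(x,x),(Suc j,j)]"]) (simp_all add: fv_cons2 fv_single sum_frob ER2_frob algebra_simps del: frob.simps fv.simps)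

lemma FB: "y < j \<Longrightarrow> ok (2*j+2*y+3) (Suc j)"
  by (rule okI[of "[(Suc j,j),(y,y)]"]) (simp_all add: fv_cons2 fv_single sum_frob ER2_frob algebra_simps del: frob.simps fv.simps)

lemma FC1: "Suc j < x \<Longrightarrow> 0 < j \<Longrightarrow> ok (2*x+2*j+5) (j+2)"
  by (rule okI[of "[(x,x),(Suc j,j),(1,0)]"]) (simp_all add: fv_cons2 fv_single sum_frob ER2_frob algebra_simps del: frob.simps fv.simps)

lemma FC2: "Suc j < x \<Longrightarrow> 1 < j \<Longrightarrow> ok (2*x+2*j+7) (j+3)"
  by (rule okI[of "[(x,x),(Suc j,j),(2,1)]"]) (simp_all add: fv_cons2 fv_single sum_frob ER2_frob algebra_simps del: frob.simps fv.simps)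

lemma E0: "0 < x \<Longrightarrow> ok (2*x+2) 0"
  by (rule okI[of "[(x,x),(0,0)]"]) (simp_all add: fv_cons2 fv_single sum_frob ER2_frob algebra_simps del: frob.simps fv.simps)

lemma E1: "2 < x \<Longrightarrow> ok (2*x+8) 1"
  by (rule okI[of "[(x,x),(2,2),(1,0)]"]) (simp_all add: fv_cons2 fv_single sum_frob ER2_frob algebra_simps del: frob.simps fv.simps)

lemma EA: "Suc j < x \<Longrightarrow> 0 < j \<Longrightarrow> ok (2*x+2*j+4) (Suc j)"
  by (rule okI[of "[(x,x),(Suc j,j),(0,0)]"]) (simp_all add: fv_cons2 fv_single sum_frob ER2_frob algebra_simps del: frob.simps fv.simps)

lemma EM: "y < j \<Longrightarrow> z < y \<Longrightarrow> ok (2*j+2*y+2*z+4) (Suc j)"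
  by (rule okI[of "[(Suc j,j),(y,y),(z,z)]"]) (simp_all add: fv_cons2 fv_single sum_frob ER2_frob algebra_simps del: frob.simps fv.simps)

lemma ok_odd:
  assumes s: "8 \<le> s" and k: "2 * k \<le> 2 * s - 1"
  shows "ok (2*s+3) k"
proof -
  consider "k = 0" | "1 \<le> k" "2*k \<le> s" | "2*k \<ge> s+3" | "2*k = s+1" | "2*k = s+2" by linarith
  thus ?thesis
  proof cases
    case 1
    have e: "2*(s+1)+1 = 2*s+3" by simp
    show ?thesis using F0[of "s+1"] 1 unfolding e by simp
  next
    case 2
    have "ok (2*(s+1-k)+2*(k-1)+3) (Suc (k-1))" by (rule FA) (use 2 in linarith)
    moreover have "2*(s+1-k)+2*(k-1)+3 = 2*s+3" "Suc (k-1) = k" using 2 by auto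
    ultimately show ?thesis by (simp only:)
  next
    case 3
    have "ok (2*(k-1)+2*(s+1-k)+3) (Suc (k-1))" by (rule FB) (use 3 k in linarith)
    moreover have "2*(k-1)+2*(s+1-k)+3 = 2*s+3" "Suc (k-1) = k" using 3 k by auto
    ultimately show ?thesis by (simp only:)
  next
    case 4
    have "ok (2*(s+1-k)+2*(k-2)+5) ((k-2)+2)" by (rule FC1) (use 4 s in linarith)+
    moreover have "2*(s+1-k)+2*(k-2)+5 = 2*s+3" "(k-2)+2 = k" using 4 s by auto
    ultimately show ?thesis by (simp only:)
  next
    case 5
    have "ok (2*(s+1-k)+2*(k-3)+7) ((k-3)+3)" by (rule FC2) (use 5 s in linarith)+
    moreover have "2*(s+1-k)+2*(k-3)+7 = 2*s+3" "(k-3)+3 = k" using 5 s by auto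
    ultimately show ?thesis by (simp only:)
  qed
qed

lemma ok_even:
  assumes u: "8 \<le> u" and k: "k \<le> u"
  shows "ok (2*u+4) k"
proof -
  consider "k = 0" | "k = 1" | "2 \<le> k" "2*k \<le> u" | "2*k \<ge> u+3" | "2*k = u+1 \<or> 2*k = u+2" by linarith
  thus ?thesis
  proof cases
    case 1
    have e: "2*(u+1)+2 = 2*u+4" by simp
    show ?thesis using E0[of "u+1"] 1 unfolding e by simp
  next
    case 2
    have "ok (2*(u-2)+8) 1" by (rule E1) (use u in linarith)
    moreover have "2*(u-2)+8 = 2*u+4" using u by auto
    ultimately show ?thesis using 2 by simp
  next
    case 3
    have "ok (2*(u+1-k)+2*(k-1)+4) (Suc (k-1))" by (rule EA) (use 3 in linarith)+
    moreover have "2*(u+1-k)+2*(k-1)+4 = 2*u+4" "Suc (k-1) = k" using 3 by auto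
    ultimately show ?thesis by (simp only:)
  next
    case 4
    have "ok (2*(k-1)+2*(u+1-k)+2*0+4) (Suc (k-1))" by (rule EM) (use 4 k in linarith)+
    moreover have "2*(k-1)+2*(u+1-k)+2*0+4 = 2*u+4" "Suc (k-1) = k" using 4 k by auto
    ultimately show ?thesis by (simp only:)
  next
    case 5
    have "ok (2*(k-1)+2*(k-2)+2*(u+3-2*k)+4) (Suc (k-1))" by (rule EM) (use 5 u in linarith)+
    moreover have "2*(k-1)+2*(k-2)+2*(u+3-2*k)+4 = 2*u+4" "Suc (k-1) = k" using 5 u by auto
    ultimately show ?thesis by (simp only:)
  qed
qed

theorem theorem3:
  fixes n :: nat and m :: int
  assumes "n \<ge> 19"
    and "- (real n - 4) / 2 \<le> real_of_int m" and "real_of_int m \<le> (real n - 4) / 2"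
  shows "is_eigenvalue (Sym n) (cayley_adj (transpositions n)) (real_of_int m)"
proof -
  define k where "k = nat \<bar>m\<bar>"
  have mk: "real_of_int m = real k \<or> real_of_int m = - real k" unfolding k_def by linarith
  have r: "2 * real_of_int \<bar>m\<bar> \<le> real n - 4" using assms(2,3) by (simp add: abs_if)
  have "real_of_int (2 * \<bar>m\<bar>) \<le> real_of_int (int n - 4)" using r by simp
  hence "2 * \<bar>m\<bar> \<le> int n - 4" by (simp only: of_int_le_iff)
  hence k2: "2 * int k \<le> int n - 4" unfolding k_def by simp
  have okn: "ok n k"
  proof (cases "even n")
    case True
    define u where "u = n div 2 - 2"
    have u: "n = 2*u+4" using True assms(1) unfolding u_def by presburger
    show ?thesis unfolding u by (rule ok_even) (use u k2 assms(1) in linarith)+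
  next
    case False
    define s where "s = (n - 3) div 2"
    have s: "n = 2*s+3" using False assms(1) unfolding s_def by presburger
    show ?thesis unfolding s by (rule ok_odd) (use s k2 assms(1) in linarith)+
  qed
  show ?thesis using mk ok_eigen[OF okn] by auto
qed

end
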